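(* Let $\mathbf{A}$ be a strictly simple algebra and let $e$ be a minimal idempotent of $\mathbf{A}$. Then $e$ is separating and dense for $\mathbf{A}$, and the localization $e(\mathbf{A})$ is a term minimal strictly simple algebra.
   Context: An algebra is strictly simple if it is finite, simple, and has no nontrivial proper subalgebras (i.e. every proper subalgebra has at most one element). A unary term $e$ of $\mathbf{A}$ is a minimal idempotent if its term operation is nonconstant, satisfies $e(e(x))=e(x)$, and its range is minimal (under inclusion) among the ranges of nonconstant idempotent unary term operations of $\mathbf{A}$. An algebra is term minimal if the term $x$ is a minimal idempotent, i.e. every idempotent unary term operation is either constant or the identity. The localization $e(\mathbf{A})$ is the algebra with universe $e(A)$ whose fundamental operations are the restrictions to $e(A)$ of the term operations $e(t(x_1,\dots,x_n))$, one for each term $t$ of $\mathbf{A}$. The term $e$ separates $\mathbf{A}$ if for all $a\neq b$ in $A$ there is a unary term $g$ with $e(g(a))\neq e(g(b))$; $e$ is dense for $\mathbf{A}$ if $\mathbf{A}$ is generated by $e(A)$. *)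

theory Defs
  imports Main
begin

text \<open>An algebra is given by a carrier set A and a set F of fundamental operations,
  each a pair (arity, function on argument lists). Operations are only meaningful on
  lists of the given length with entries in A.\<close>

definition is_algebra :: "'a set \<Rightarrow> (nat \<times> ('a list \<Rightarrow> 'a)) set \<Rightarrow> bool" where
  "is_algebra A F \<longleftrightarrow> A \<noteq> {} \<and>
     (\<forall>(n, f) \<in> F. \<forall>xs. length xs = n \<and> set xs \<subseteq> A \<longrightarrow> f xs \<in> A)"

inductive_set clo :: "(nat \<times> ('a list \<Rightarrow> 'a)) set \<Rightarrow> nat \<Rightarrow> ('a list \<Rightarrow> 'a) set"
  for F :: "(nat \<times> ('a list \<Rightarrow> 'a)) set" and n :: nat where
  proj: "i < n \<Longrightarrow> (\<lambda>xs. xs ! i) \<in> clo F n"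
| app: "(k, f) \<in> F \<Longrightarrow> length gs = k \<Longrightarrow> \<forall>g\<in>set gs. g \<in> clo F n \<Longrightarrow>
        (\<lambda>xs. f (map (\<lambda>g. g xs) gs)) \<in> clo F n"

definition closed_under :: "(nat \<times> ('a list \<Rightarrow> 'a)) set \<Rightarrow> 'a set \<Rightarrow> bool" where
  "closed_under F B \<longleftrightarrow> (\<forall>(n, f) \<in> F. \<forall>xs. length xs = n \<and> set xs \<subseteq> B \<longrightarrow> f xs \<in> B)"

definition subalgebra :: "'a set \<Rightarrow> (nat \<times> ('a list \<Rightarrow> 'a)) set \<Rightarrow> 'a set \<Rightarrow> bool" where
  "subalgebra A F B \<longleftrightarrow> B \<subseteq> A \<and> closed_under F B"

definition Sg :: "'a set \<Rightarrow> (nat \<times> ('a list \<Rightarrow> 'a)) set \<Rightarrow> 'a set \<Rightarrow> 'a set" where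
  "Sg A F X = \<Inter>{B. subalgebra A F B \<and> X \<subseteq> B}"

definition congruence :: "'a set \<Rightarrow> (nat \<times> ('a list \<Rightarrow> 'a)) set \<Rightarrow> ('a \<times> 'a) set \<Rightarrow> bool" where
  "congruence A F \<theta> \<longleftrightarrow> equiv A \<theta> \<and>
     (\<forall>(n, f) \<in> F. \<forall>xs ys. length xs = n \<and> length ys = n \<and> set xs \<subseteq> A \<and> set ys \<subseteq> A \<and>
        (\<forall>i<n. (xs ! i, ys ! i) \<in> \<theta>) \<longrightarrow> (f xs, f ys) \<in> \<theta>)"

definition simple_alg :: "'a set \<Rightarrow> (nat \<times> ('a list \<Rightarrow> 'a)) set \<Rightarrow> bool" where
  "simple_alg A F \<longleftrightarrow> is_algebra A F \<and> (\<exists>a\<in>A. \<exists>b\<in>A. a \<noteq> b) \<and>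
     (\<forall>\<theta>. congruence A F \<theta> \<longrightarrow> \<theta> = Id_on A \<or> \<theta> = A \<times> A)"

definition strictly_simple :: "'a set \<Rightarrow> (nat \<times> ('a list \<Rightarrow> 'a)) set \<Rightarrow> bool" where
  "strictly_simple A F \<longleftrightarrow> finite A \<and> simple_alg A F \<and>
     (\<forall>B. subalgebra A F B \<and> B \<noteq> A \<longrightarrow> card B \<le> 1)"

text \<open>Unary term operations are elements of clo F 1, applied as u [x].\<close>
definition idempotent_on :: "'a set \<Rightarrow> ('a list \<Rightarrow> 'a) \<Rightarrow> bool" where
  "idempotent_on A u \<longleftrightarrow> (\<forall>x\<in>A. u [u [x]] = u [x])"

definition nonconstant_on :: "'a set \<Rightarrow> ('a list \<Rightarrow> 'a) \<Rightarrow> bool" where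
  "nonconstant_on A u \<longleftrightarrow> (\<exists>x\<in>A. \<exists>y\<in>A. u [x] \<noteq> u [y])"

definition urange :: "'a set \<Rightarrow> ('a list \<Rightarrow> 'a) \<Rightarrow> 'a set" where
  "urange A u = (\<lambda>x. u [x]) ` A"

definition minimal_idempotent :: "'a set \<Rightarrow> (nat \<times> ('a list \<Rightarrow> 'a)) set \<Rightarrow> ('a list \<Rightarrow> 'a) \<Rightarrow> bool" where
  "minimal_idempotent A F e \<longleftrightarrow> e \<in> clo F 1 \<and> nonconstant_on A e \<and> idempotent_on A e \<and>
     (\<forall>g \<in> clo F 1. nonconstant_on A g \<and> idempotent_on A g \<and> urange A g \<subseteq> urange A e
        \<longrightarrow> urange A g = urange A e)"

definition term_minimal :: "'a set \<Rightarrow> (nat \<times> ('a list \<Rightarrow> 'a)) set \<Rightarrow> bool" where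
  "term_minimal A F \<longleftrightarrow> minimal_idempotent A F (\<lambda>xs. xs ! 0)"

definition loc_univ :: "'a set \<Rightarrow> ('a list \<Rightarrow> 'a) \<Rightarrow> 'a set" where
  "loc_univ A e = urange A e"

definition loc_ops :: "(nat \<times> ('a list \<Rightarrow> 'a)) set \<Rightarrow> ('a list \<Rightarrow> 'a) \<Rightarrow> (nat \<times> ('a list \<Rightarrow> 'a)) set" where
  "loc_ops F e = {(n, \<lambda>xs. e [t xs]) | n t. t \<in> clo F n}"

definition separates :: "'a set \<Rightarrow> (nat \<times> ('a list \<Rightarrow> 'a)) set \<Rightarrow> ('a list \<Rightarrow> 'a) \<Rightarrow> bool" where
  "separates A F e \<longleftrightarrow> (\<forall>a\<in>A. \<forall>b\<in>A. a \<noteq> b \<longrightarrow> (\<exists>g\<in>clo F 1. e [g [a]] \<noteq> e [g [b]]))"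

definition dense :: "'a set \<Rightarrow> (nat \<times> ('a list \<Rightarrow> 'a)) set \<Rightarrow> ('a list \<Rightarrow> 'a) \<Rightarrow> bool" where
  "dense A F e \<longleftrightarrow> Sg A F (urange A e) = A"

end

theory Submission
  imports Defs
begin


lemma clo_closed:
  assumes "closed_under F B" "t \<in> clo F n" "length xs = n" "set xs \<subseteq> B"
  shows "t xs \<in> B"
  using assms(2,3,4)
proof (induction t rule: clo.induct)
  case (proj i) then show ?case by auto
next
  case (app k f gs)
  have "length (map (\<lambda>g. g xs) gs) = k" "set (map (\<lambda>g. g xs) gs) \<subseteq> B"
    using app by auto
  then show ?case using assms(1) app(1) unfolding closed_under_def by blast
qed

lemma clo_comp:
  assumes "t \<in> clo F n" "length gs = n" "set gs \<subseteq> clo F m"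
  shows "(\<lambda>xs. t (map (\<lambda>g. g xs) gs)) \<in> clo F m"
  using assms
proof (induction t rule: clo.induct)
  case (proj i)
  have "(\<lambda>xs. map (\<lambda>g. g xs) gs ! i) = gs ! i" using proj by (auto simp: fun_eq_iff)
  then show ?case using proj by auto
next
  case (app k f hs)
  have "(\<lambda>xs. f (map (\<lambda>h. h xs) (map (\<lambda>h. \<lambda>xs. h (map (\<lambda>g. g xs) gs)) hs))) \<in> clo F m"
    by (rule clo.app[OF app(1)]) (use app in auto)
  then show ?case by (simp add: o_def)
qed

lemma clo_shift:
  assumes "t \<in> clo F n" "k + n \<le> m"
  shows "(\<lambda>zs. t (map (\<lambda>i. zs ! (k + i)) [0..<n])) \<in> clo F m"
proof -
  have "(\<lambda>zs. t (map (\<lambda>g. g zs) (map (\<lambda>i. \<lambda>zs. zs ! (k + i)) [0..<n]))) \<in> clo F m"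
    by (rule clo_comp[OF assms(1)]) (use assms(2) in \<open>auto intro: clo.proj\<close>)
  then show ?thesis by (simp add: o_def)
qed

lemma list_choice:
  assumes "\<forall>q\<in>set qs. \<exists>g. P q g"
  shows "\<exists>gs. length gs = length qs \<and> (\<forall>i<length qs. P (qs ! i) (gs ! i))"
proof -
  let ?gs = "map (\<lambda>q. SOME g. P q g) qs"
  have "\<forall>i<length qs. P (qs ! i) (?gs ! i)"
    using assms by (auto intro: someI_ex)
  then show ?thesis by (intro exI[of _ ?gs]) auto
qed

definition Gen :: "(nat \<times> ('a list \<Rightarrow> 'a)) set \<Rightarrow> ('a \<times> 'a) set \<Rightarrow> ('a \<times> 'a) set" where
  "Gen F G = {(t xs, t ys) | n t xs ys. t \<in> clo F n \<and> length xs = n \<and> length ys = n \<and>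
      (\<forall>i<n. (xs ! i, ys ! i) \<in> G)}"

lemma Gen_list:
  assumes "set qs \<subseteq> Gen F G"
  shows "\<exists>N ts XS YS. length XS = N \<and> length YS = N \<and> (\<forall>i<N. (XS ! i, YS ! i) \<in> G) \<and>
     set ts \<subseteq> clo F N \<and> map fst qs = map (\<lambda>t. t XS) ts \<and> map snd qs = map (\<lambda>t. t YS) ts"
  using assms
proof (induction qs)
  case Nil
  show ?case by (rule exI[of _ 0], rule exI[of _ "[]"]) auto
next
  case (Cons q qs)
  then obtain N ts XS YS where IH: "length XS = N" "length YS = N" "\<forall>i<N. (XS ! i, YS ! i) \<in> G"
     "set ts \<subseteq> clo F N" "map fst qs = map (\<lambda>t. t XS) ts" "map snd qs = map (\<lambda>t. t YS) ts"
    by auto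
  from Cons(2) obtain n t xs ys where q: "q = (t xs, t ys)" "t \<in> clo F n" "length xs = n"
    "length ys = n" "\<forall>i<n. (xs ! i, ys ! i) \<in> G"
    unfolding Gen_def by auto
  define t' where "t' = (\<lambda>zs. t (map (\<lambda>i. zs ! (0 + i)) [0..<n]))"
  define ts' where "ts' = map (\<lambda>s. \<lambda>zs. s (map (\<lambda>i. zs ! (n + i)) [0..<N])) ts"
  have t'c: "t' \<in> clo F (n + N)" unfolding t'_def by (rule clo_shift[OF q(2)]) auto
  have ts'c: "set ts' \<subseteq> clo F (n + N)" unfolding ts'_def
    using IH(4) by (auto intro: clo_shift)
  have e1: "map (\<lambda>i. (xs @ XS) ! (0 + i)) [0..<n] = xs"
    using q(3) by (intro nth_equalityI) (auto simp: nth_append)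
  have e2: "map (\<lambda>i. (ys @ YS) ! (0 + i)) [0..<n] = ys"
    using q(4) by (intro nth_equalityI) (auto simp: nth_append)
  have e3: "map (\<lambda>i. (xs @ XS) ! (n + i)) [0..<N] = XS"
    using q(3) IH(1) by (intro nth_equalityI) (auto simp: nth_append)
  have e4: "map (\<lambda>i. (ys @ YS) ! (n + i)) [0..<N] = YS"
    using q(4) IH(2) by (intro nth_equalityI) (auto simp: nth_append)
  have G: "\<forall>i<n + N. ((xs @ XS) ! i, (ys @ YS) ! i) \<in> G"
    using q(3,4,5) IH(1,2,3) by (auto simp: nth_append)
  show ?case
    apply (rule exI[of _ "n + N"], rule exI[of _ "t' # ts'"], rule exI[of _ "xs @ XS"], rule exI[of _ "ys @ YS"])
    using t'c ts'c G q(1,3,4) IH(1,2,5,6) e1 e2 e3 e4 by (auto simp: t'_def ts'_def o_def)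
qed

lemma Gen_closed:
  assumes "(k, f) \<in> F" "length qs = k" "set qs \<subseteq> Gen F G"
  shows "(f (map fst qs), f (map snd qs)) \<in> Gen F G"
proof -
  obtain N ts XS YS where H: "length XS = N" "length YS = N" "\<forall>i<N. (XS ! i, YS ! i) \<in> G"
     "set ts \<subseteq> clo F N" "map fst qs = map (\<lambda>t. t XS) ts" "map snd qs = map (\<lambda>t. t YS) ts"
    using Gen_list[OF assms(3)] by blast
  have lt: "length ts = k" using H(5) assms(2) by (metis length_map)
  have c: "(\<lambda>xs. f (map (\<lambda>g. g xs) ts)) \<in> clo F N"
    by (rule clo.app[OF assms(1) lt]) (use H(4) in auto)
  show ?thesis unfolding Gen_def H(5,6)
    apply (rule CollectI, rule exI[of _ N], rule exI[of _ "\<lambda>xs. f (map (\<lambda>g. g xs) ts)"])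
    using c H(1,2,3) by auto
qed



inductive_set pol :: "'a set \<Rightarrow> (nat \<times> ('a list \<Rightarrow> 'a)) set \<Rightarrow> ('a \<Rightarrow> 'a) set"
  for A :: "'a set" and F :: "(nat \<times> ('a list \<Rightarrow> 'a)) set" where
  pid: "(\<lambda>x. x) \<in> pol A F"
| pconst: "c \<in> A \<Longrightarrow> (\<lambda>x. c) \<in> pol A F"
| papp: "(k, f) \<in> F \<Longrightarrow> length ps = k \<Longrightarrow> \<forall>p\<in>set ps. p \<in> pol A F \<Longrightarrow>
         (\<lambda>x. f (map (\<lambda>p. p x) ps)) \<in> pol A F"

lemma pol_closed:
  assumes "closed_under F A" "p \<in> pol A F" "x \<in> A"
  shows "p x \<in> A"
  using assms(2)
proof (induction p rule: pol.induct)
  case (papp k f ps)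
  have "length (map (\<lambda>p. p x) ps) = k" "set (map (\<lambda>p. p x) ps) \<subseteq> A" using papp by auto
  then show ?case using assms(1) papp(1) unfolding closed_under_def by blast
qed (use assms in auto)

lemma pol_comp:
  assumes "p \<in> pol A F" "q \<in> pol A F"
  shows "(\<lambda>x. p (q x)) \<in> pol A F"
  using assms(1)
proof (induction p rule: pol.induct)
  case pid then show ?case using assms(2) by simp
next
  case (pconst c) then show ?case by (rule pol.pconst)
next
  case (papp k f ps)
  have "(\<lambda>x. f (map (\<lambda>p. p x) (map (\<lambda>p. \<lambda>x. p (q x)) ps))) \<in> pol A F"
    by (rule pol.papp[OF papp(1)]) (use papp in auto)
  then show ?case by (simp add: o_def)
qed

lemma pol_subst:
  assumes "(k, f) \<in> F" "length zs = k" "set zs \<subseteq> A" "j < k"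
  shows "(\<lambda>x. f (zs[j := x])) \<in> pol A F"
proof -
  let ?ps = "map (\<lambda>i. if i = j then (\<lambda>x. x) else (\<lambda>x. zs ! i)) [0..<k]"
  have "(\<lambda>x. f (map (\<lambda>p. p x) ?ps)) \<in> pol A F"
  proof (rule pol.papp[OF assms(1)])
    show "length ?ps = k" by simp
    show "\<forall>p\<in>set ?ps. p \<in> pol A F"
    proof
      fix p assume "p \<in> set ?ps"
      then obtain i where i: "i < k" "p = (if i = j then (\<lambda>x. x) else (\<lambda>x. zs ! i))" by auto
      have "zs ! i \<in> A" using i(1) assms(2,3) nth_mem by blast
      then show "p \<in> pol A F" using i(2) by (auto intro: pol.pid pol.pconst)
    qed
  qed
  moreover have "\<And>x. map (\<lambda>p. p x) ?ps = zs[j := x]"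
    using assms(2) by (intro nth_equalityI) auto
  ultimately show ?thesis by simp
qed

lemma l1: "length xs = n \<Longrightarrow> length ys = n \<Longrightarrow> j < n \<Longrightarrow> (take j ys @ drop j xs)[j := xs ! j] = take j ys @ drop j xs"
  by (simp add: list_update_append Cons_nth_drop_Suc[symmetric])
lemma l2: "length xs = n \<Longrightarrow> length ys = n \<Longrightarrow> j < n \<Longrightarrow> (take j ys @ drop j xs)[j := ys ! j] = take (Suc j) ys @ drop (Suc j) xs"
  by (simp add: list_update_append take_Suc_conv_app_nth Cons_nth_drop_Suc[symmetric])

lemma polcong:
  assumes alg: "is_algebra A F" and R: "equiv V R" and phi: "\<forall>x\<in>A. \<phi> x \<in> V"
  shows "congruence A F {(a, b) \<in> A \<times> A. \<forall>p\<in>pol A F. (\<phi> (p a), \<phi> (p b)) \<in> R}"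
proof -
  define T where "T = {(a, b) \<in> A \<times> A. \<forall>p\<in>pol A F. (\<phi> (p a), \<phi> (p b)) \<in> R}"
  note TT = T_def[symmetric]

  have cl: "closed_under F A" using alg unfolding is_algebra_def closed_under_def by blast
  have Rr: "\<And>x. x \<in> V \<Longrightarrow> (x, x) \<in> R" using R by (auto simp: equiv_def refl_on_def)
  have Rs: "\<And>x y. (x, y) \<in> R \<Longrightarrow> (y, x) \<in> R" using R by (auto simp: equiv_def sym_def)
  have Rt: "\<And>x y z. (x, y) \<in> R \<Longrightarrow> (y, z) \<in> R \<Longrightarrow> (x, z) \<in> R"
    using R unfolding equiv_def trans_def by blast
  have eq: "equiv A T"
  proof (rule equivI)
    show "T \<subseteq> A \<times> A" by (auto simp: T_def)
    show "refl_on A T"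
    proof (rule refl_onI)
      fix x assume x: "x \<in> A"
      have "\<forall>p\<in>pol A F. (\<phi> (p x), \<phi> (p x)) \<in> R"
      proof
        fix p assume "p \<in> pol A F"
        then have "p x \<in> A" using pol_closed[OF cl _ x] by blast
        then show "(\<phi> (p x), \<phi> (p x)) \<in> R" using Rr phi by blast
      qed
      then show "(x, x) \<in> T" using x by (simp add: T_def)
    qed
    show "sym T"
    proof (rule symI)
      fix a b assume "(a, b) \<in> T" then show "(b, a) \<in> T" using Rs by (auto simp: T_def)
    qed
    show "trans T"
    proof (rule transI)
      fix a b c assume "(a, b) \<in> T" "(b, c) \<in> T" then show "(a, c) \<in> T"
        unfolding T_def using Rt by blast
    qed
  qed
  have comp: "(f xs, f ys) \<in> T"
    if f: "(n, f) \<in> F" and l: "length xs = n" "length ys = n" "set xs \<subseteq> A" "set ys \<subseteq> A"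
      and rel: "\<forall>i<n. (xs ! i, ys ! i) \<in> T" for n f xs ys
  proof -
    have fcl: "\<forall>xs. length xs = n \<and> set xs \<subseteq> A \<longrightarrow> f xs \<in> A"
      using cl f unfolding closed_under_def by blast
    have fA: "f xs \<in> A" "f ys \<in> A" using fcl l by auto
    have "\<forall>p\<in>pol A F. (\<phi> (p (f xs)), \<phi> (p (f ys))) \<in> R"
    proof
      fix p assume p: "p \<in> pol A F"
      have step: "j \<le> n \<Longrightarrow> (\<phi> (p (f xs)), \<phi> (p (f (take j ys @ drop j xs)))) \<in> R" for j
      proof (induction j)
        case 0
        have "p (f xs) \<in> A" by (rule pol_closed[OF cl p fA(1)])
        then show ?case using Rr phi by simp
      next
        case (Suc j)
        let ?zs = "take j ys @ drop j xs"
        have lz: "length ?zs = n" using l(1,2) Suc.prems by simp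
        have s1: "set (take j ys) \<subseteq> set ys" by (rule set_take_subset)
        have s2: "set (drop j xs) \<subseteq> set xs" by (rule set_drop_subset)
        have sz: "set ?zs \<subseteq> A" using s1 s2 l(3,4) by auto
        have jn: "j < n" using Suc.prems by simp
        have z1: "?zs[j := xs ! j] = ?zs"
          using l(1,2) jn by (rule l1)
        have z2: "?zs[j := ys ! j] = take (Suc j) ys @ drop (Suc j) xs"
          using l(1,2) jn by (rule l2)
        have q: "(\<lambda>x. p (f (?zs[j := x]))) \<in> pol A F"
          by (rule pol_comp[OF p pol_subst[OF f lz sz jn]])
        have "(xs ! j, ys ! j) \<in> T" using rel jn by blast
        then have allp: "\<forall>p\<in>pol A F. (\<phi> (p (xs ! j)), \<phi> (p (ys ! j))) \<in> R" unfolding T_def by blast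
        have "(\<phi> (p (f (?zs[j := xs ! j]))), \<phi> (p (f (?zs[j := ys ! j])))) \<in> R"
          using bspec[OF allp q] by simp
        then have "(\<phi> (p (f ?zs)), \<phi> (p (f (take (Suc j) ys @ drop (Suc j) xs)))) \<in> R"
          using z1 z2 by simp
        moreover have "(\<phi> (p (f xs)), \<phi> (p (f ?zs))) \<in> R" using Suc.IH jn by simp
        ultimately show ?case using Rt by blast
      qed
      from step[of n] show "(\<phi> (p (f xs)), \<phi> (p (f ys))) \<in> R" using l by simp
    qed
    then show ?thesis using fA by (simp add: T_def)
  qed
  have comp': "\<forall>(n, f) \<in> F. \<forall>xs ys. length xs = n \<and> length ys = n \<and> set xs \<subseteq> A \<and> set ys \<subseteq> A \<and>
        (\<forall>i<n. (xs ! i, ys ! i) \<in> T) \<longrightarrow> (f xs, f ys) \<in> T"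
    using comp by blast
  show ?thesis unfolding congruence_def TT using eq comp' by blast
qed

lemma big_sub:
  assumes "strictly_simple A F" "subalgebra A F D" "x \<in> D" "y \<in> D" "x \<noteq> y"
  shows "D = A"
proof (rule ccontr)
  assume "D \<noteq> A"
  then have "card D \<le> 1" using assms(1,2) unfolding strictly_simple_def by blast
  moreover have "finite D" using assms(1,2) unfolding strictly_simple_def subalgebra_def
    using finite_subset by blast
  moreover have "card {x, y} \<le> card D" using assms(3,4) \<open>finite D\<close> by (intro card_mono) auto
  ultimately show False using assms(5) by simp
qed



lemma equiv_Id_on': "equiv U (Id_on U)"
proof (rule equivI)
  show "Id_on U \<subseteq> U \<times> U" by auto
  show "refl_on U (Id_on U)" by (rule refl_on_Id_on)
  show "sym (Id_on U)" by (rule symI) (auto simp: Id_on_iff)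
  show "trans (Id_on U)" by (rule transI) (auto simp: Id_on_iff)
qed

lemma cong_app:
  assumes "congruence A F \<theta>" "(n, f) \<in> F" "length xs = n" "length ys = n" "set xs \<subseteq> A" "set ys \<subseteq> A"
    "\<forall>i<n. (xs ! i, ys ! i) \<in> \<theta>"
  shows "(f xs, f ys) \<in> \<theta>"
proof -
  have "\<forall>(n, f) \<in> F. \<forall>xs ys. length xs = n \<and> length ys = n \<and> set xs \<subseteq> A \<and> set ys \<subseteq> A \<and>
        (\<forall>i<n. (xs ! i, ys ! i) \<in> \<theta>) \<longrightarrow> (f xs, f ys) \<in> \<theta>"
    using assms(1) unfolding congruence_def by (elim conjE)
  from bspec[OF this assms(2)] have "\<forall>xs ys. length xs = n \<and> length ys = n \<and> set xs \<subseteq> A \<and> set ys \<subseteq> A \<and>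
        (\<forall>i<n. (xs ! i, ys ! i) \<in> \<theta>) \<longrightarrow> (f xs, f ys) \<in> \<theta>"
    by simp
  then have "length xs = n \<and> length ys = n \<and> set xs \<subseteq> A \<and> set ys \<subseteq> A \<and>
        (\<forall>i<n. (xs ! i, ys ! i) \<in> \<theta>) \<longrightarrow> (f xs, f ys) \<in> \<theta>" by (elim allE)
  then show ?thesis using assms(3-7) by simp
qed

lemma ss_cl: "strictly_simple A F \<Longrightarrow> closed_under F A"
  unfolding strictly_simple_def simple_alg_def is_algebra_def closed_under_def by (elim conjE)

lemma ss_simple: 
  assumes "strictly_simple A F" "congruence A F \<theta>" shows "\<theta> = Id_on A \<or> \<theta> = A \<times> A"
proof -
  have "\<forall>\<theta>. congruence A F \<theta> \<longrightarrow> \<theta> = Id_on A \<or> \<theta> = A \<times> A"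
    using assms(1) unfolding strictly_simple_def simple_alg_def by (elim conjE)
  then show ?thesis using assms(2) by (elim allE impE)
qed

lemma proj0: "(\<lambda>xs. xs ! 0) \<in> clo F (Suc n)"
  by (rule clo.proj) simp

lemma closed_underI:
  assumes "\<And>n f xs. (n, f) \<in> F \<Longrightarrow> length xs = n \<Longrightarrow> set xs \<subseteq> B \<Longrightarrow> f xs \<in> B"
  shows "closed_under F B"
  unfolding closed_under_def using assms by fast

lemma closed_underD:
  assumes "closed_under F B" "(n, f) \<in> F" "length xs = n" "set xs \<subseteq> B"
  shows "f xs \<in> B"
  using assms unfolding closed_under_def by fast

lemma Gen_G:
  assumes "(x, y) \<in> G" shows "(x, y) \<in> Gen F G"
proof -
  have "(([x] ! 0), ([y] ! 0)) \<in> Gen F G" unfolding Gen_def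
    apply (rule CollectI, rule exI[of _ 1], rule exI[of _ "\<lambda>xs. xs ! 0"], rule exI[of _ "[x]"], rule exI[of _ "[y]"])
    using assms proj0[of F 0] by auto
  then show ?thesis by simp
qed

lemma Gen_full:
  assumes ss: "strictly_simple A F" and xy: "x \<in> A" "y \<in> A" "x \<noteq> y" "(x, x) \<in> G" "(y, y) \<in> G"
    and c: "c \<in> A"
  shows "(c, c) \<in> Gen F G"
proof -
  define D where "D = {c \<in> A. (c, c) \<in> Gen F G}"
  have cl: "closed_under F A" by (rule ss_cl[OF ss])
  have "closed_under F D"
  proof (rule closed_underI)
    fix n f cs assume nf: "(n, f) \<in> F" and l: "length cs = n" "set cs \<subseteq> D"
    have "set cs \<subseteq> A" using l unfolding D_def by auto
    then have fA: "f cs \<in> A" using closed_underD[OF cl nf l(1)] by blast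
    have "set (map (\<lambda>c. (c, c)) cs) \<subseteq> Gen F G" using l unfolding D_def by auto
    from Gen_closed[OF nf _ this] l
    have "(f cs, f cs) \<in> Gen F G" by (simp add: o_def)
    then show "f cs \<in> D" using fA D_def by simp
  qed
  then have "subalgebra A F D" unfolding subalgebra_def D_def by blast
  moreover have "x \<in> D" "y \<in> D" using xy Gen_G unfolding D_def by auto
  ultimately have "D = A" using big_sub[OF ss] xy(3) by blast
  then show ?thesis using c D_def by blast
qed

lemma Gen_pol:
  assumes diag: "\<forall>c\<in>A. (c, c) \<in> Gen F G" and xy: "(x, y) \<in> Gen F G" and p: "p \<in> pol A F"
  shows "(p x, p y) \<in> Gen F G"
  using p
proof (induction p rule: pol.induct)
  case pid then show ?case using xy by simp
next
  case (pconst c) then show ?case using diag by simp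
next
  case (papp k f ps)
  have "set (map (\<lambda>p. (p x, p y)) ps) \<subseteq> Gen F G" using papp by auto
  from Gen_closed[OF papp(1) _ this] papp(2)
  show ?case by (simp add: o_def)
qed

lemma clo_loc:
  assumes "g \<in> clo (loc_ops F e) n" "e \<in> clo F 1"
  shows "\<exists>t\<in>clo F n. \<forall>xs. length xs = n \<longrightarrow> g xs = t xs"
  using assms(1)
proof (induction g rule: clo.induct)
  case (proj i) then show ?case by (auto intro: clo.proj)
next
  case (app k fe hs)
  obtain s where s: "s \<in> clo F k" "fe = (\<lambda>xs. e [s xs])"
    using app(1) unfolding loc_ops_def by auto
  have "\<forall>h\<in>set hs. \<exists>t. t \<in> clo F n \<and> (\<forall>xs. length xs = n \<longrightarrow> h xs = t xs)"
    using app(3) by blast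
  from list_choice[OF this] obtain ts where ts: "length ts = length hs"
    "\<forall>i<length hs. ts ! i \<in> clo F n \<and> (\<forall>xs. length xs = n \<longrightarrow> (hs ! i) xs = (ts ! i) xs)"
    by blast
  have tsc: "set ts \<subseteq> clo F n" using ts by (auto simp: set_conv_nth)
  have s': "(\<lambda>xs. s (map (\<lambda>g. g xs) ts)) \<in> clo F n"
    by (rule clo_comp[OF s(1) _ tsc]) (use ts app(2) in simp)
  have e': "(\<lambda>xs. e (map (\<lambda>g. g xs) [\<lambda>xs. s (map (\<lambda>g. g xs) ts)])) \<in> clo F n"
    by (rule clo_comp[OF assms(2)]) (use s' in auto)
  have eq: "map (\<lambda>h. h xs) hs = map (\<lambda>g. g xs) ts" if "length xs = n" for xs
    using ts that by (intro nth_equalityI) auto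
  show ?case
    apply (rule bexI[OF _ e'])
    using eq s(2) by simp
qed



lemma mi_e: "minimal_idempotent A F e \<Longrightarrow> e \<in> clo F 1"
  unfolding minimal_idempotent_def by (elim conjE)

lemma mi_nc: "minimal_idempotent A F e \<Longrightarrow> nonconstant_on A e"
  unfolding minimal_idempotent_def by (elim conjE)

lemma mi_id: "minimal_idempotent A F e \<Longrightarrow> idempotent_on A e"
  unfolding minimal_idempotent_def by (elim conjE)

lemma mi_min: "minimal_idempotent A F e \<Longrightarrow> g \<in> clo F 1 \<Longrightarrow> nonconstant_on A g \<Longrightarrow> idempotent_on A g
   \<Longrightarrow> urange A g \<subseteq> urange A e \<Longrightarrow> urange A g = urange A e"
  unfolding minimal_idempotent_def by blast

lemma U_sub:
  assumes ss: "strictly_simple A F" and mi: "minimal_idempotent A F e"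
  shows "urange A e \<subseteq> A"
proof
  fix u assume "u \<in> urange A e"
  then obtain x where x: "x \<in> A" "u = e [x]" unfolding urange_def by auto
  have "e [x] \<in> A" by (rule clo_closed[OF ss_cl[OF ss] mi_e[OF mi]]) (use x in auto)
  then show "u \<in> A" using x by simp
qed

lemma eU:
  assumes mi: "minimal_idempotent A F e" and u: "u \<in> urange A e"
  shows "e [u] = u"
proof -
  obtain x where x: "x \<in> A" "u = e [x]" using u unfolding urange_def by auto
  have "\<forall>x\<in>A. e [e [x]] = e [x]" using mi_id[OF mi] unfolding idempotent_on_def by simp
  then show ?thesis using x by simp
qed

lemma U2:
  assumes mi: "minimal_idempotent A F e"
  obtains x y where "x \<in> A" "y \<in> A" "e [x] \<noteq> e [y]"
  using mi_nc[OF mi] unfolding nonconstant_on_def by blast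

lemma Ta_sub:
  assumes ss: "strictly_simple A F" and a: "a \<in> A"
  shows "subalgebra A F {g [a] | g. g \<in> clo F 1}"
proof -
  let ?T = "{g [a] | g. g \<in> clo F 1}"
  have cl: "closed_under F A" by (rule ss_cl[OF ss])
  have sub: "?T \<subseteq> A"
  proof
    fix c assume "c \<in> ?T"
    then obtain g where g: "g \<in> clo F 1" "c = g [a]" by blast
    have "g [a] \<in> A" by (rule clo_closed[OF cl g(1)]) (use a in auto)
    then show "c \<in> A" using g by simp
  qed
  have "closed_under F ?T"
  proof (rule closed_underI)
    fix n f cs assume nf: "(n, f) \<in> F" and l: "length cs = n" "set cs \<subseteq> ?T"
    have "\<forall>c\<in>set cs. \<exists>g. g \<in> clo F 1 \<and> c = g [a]" using l(2) by blast
    from list_choice[OF this] obtain gs where gs: "length gs = length cs"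
      "\<forall>i<length cs. gs ! i \<in> clo F 1 \<and> cs ! i = (gs ! i) [a]" by blast
    have gsc: "set gs \<subseteq> clo F 1" using gs by (auto simp: set_conv_nth)
    have c: "(\<lambda>xs. f (map (\<lambda>g. g xs) gs)) \<in> clo F 1"
      by (rule clo.app[OF nf]) (use gs l gsc in auto)
    have m: "map (\<lambda>g. g [a]) gs = cs" using gs by (intro nth_equalityI) auto
    show "f cs \<in> ?T"
      apply (rule CollectI, rule exI[of _ "\<lambda>xs. f (map (\<lambda>g. g xs) gs)"])
      using c m by simp
  qed
  then show ?thesis using sub unfolding subalgebra_def by blast
qed

lemma Theta_Id:
  assumes ss: "strictly_simple A F" and mi: "minimal_idempotent A F e"
  shows "{(a, b) \<in> A \<times> A. \<forall>p\<in>pol A F. ((\<lambda>x. e [x]) (p a), (\<lambda>x. e [x]) (p b)) \<in> Id_on (urange A e)}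
     = Id_on A" (is "?T = _")
proof -
  have alg: "is_algebra A F" using ss unfolding strictly_simple_def simple_alg_def by (elim conjE)
  have phi: "\<forall>x\<in>A. (\<lambda>x. e [x]) x \<in> urange A e" unfolding urange_def by auto
  have c: "congruence A F ?T" by (rule polcong[OF alg equiv_Id_on' phi])
  obtain x y where xy: "x \<in> A" "y \<in> A" "e [x] \<noteq> e [y]" using U2[OF mi] by blast
  have "(x, y) \<notin> ?T"
  proof
    assume "(x, y) \<in> ?T"
    then have "\<forall>p\<in>pol A F. (e [p x], e [p y]) \<in> Id_on (urange A e)" by simp
    from bspec[OF this pol.pid]
    have "((\<lambda>x. e [x]) ((\<lambda>x. x) x), (\<lambda>x. e [x]) ((\<lambda>x. x) y)) \<in> Id_on (urange A e)" by simp
    then show False using xy by (simp add: Id_on_iff)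
  qed
  then have "?T \<noteq> A \<times> A" using xy by blast
  then show ?thesis using ss_simple[OF ss c] by blast
qed

lemma sep_main:
  assumes ss: "strictly_simple A F" and mi: "minimal_idempotent A F e"
    and a: "a \<in> A" and b: "b \<in> A" and nosep: "\<forall>g\<in>clo F 1. e [g [a]] = e [g [b]]"
    and Ta: "{g [a] | g. g \<in> clo F 1} = A"
  shows "a = b"
proof -
  define S where "S = {(g [a], g [b]) | g. g \<in> clo F 1}"
  have cl: "closed_under F A" by (rule ss_cl[OF ss])
  have Sclosed: "(f (map fst qs), f (map snd qs)) \<in> S"
    if nf: "(k, f) \<in> F" and l: "length qs = k" and qS: "set qs \<subseteq> S" for k f qs
  proof -
    have "\<forall>q\<in>set qs. \<exists>g. g \<in> clo F 1 \<and> q = (g [a], g [b])" using qS unfolding S_def by blast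
    from list_choice[OF this] obtain gs where gs: "length gs = length qs"
      "\<forall>i<length qs. gs ! i \<in> clo F 1 \<and> qs ! i = ((gs ! i) [a], (gs ! i) [b])" by blast
    have gsc: "set gs \<subseteq> clo F 1" using gs by (auto simp: set_conv_nth)
    have c: "(\<lambda>xs. f (map (\<lambda>g. g xs) gs)) \<in> clo F 1"
      by (rule clo.app[OF nf]) (use gs l gsc in auto)
    have m1: "map (\<lambda>g. g [a]) gs = map fst qs" using gs by (intro nth_equalityI) auto
    have m2: "map (\<lambda>g. g [b]) gs = map snd qs" using gs by (intro nth_equalityI) auto
    show ?thesis unfolding S_def
      apply (rule CollectI, rule exI[of _ "\<lambda>xs. f (map (\<lambda>g. g xs) gs)"])
      using c m1 m2 by simp
  qed
  have UA: "urange A e \<subseteq> A" by (rule U_sub[OF ss mi])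
  have SU: "(u, u) \<in> S" if u: "u \<in> urange A e" for u
  proof -
    have "u \<in> A" using u UA by blast
    then obtain h where h: "h \<in> clo F 1" "u = h [a]" using Ta by blast
    have g: "(\<lambda>xs. e (map (\<lambda>g. g xs) [h])) \<in> clo F 1"
      by (rule clo_comp[OF mi_e[OF mi]]) (use h in auto)
    have "e [h [a]] = u" using eU[OF mi u] h by simp
    moreover have "e [h [b]] = e [h [a]]" using nosep h by simp
    ultimately show ?thesis unfolding S_def using g by force
  qed
  define D where "D = {c \<in> A. (c, c) \<in> S}"
  have "closed_under F D"
  proof (rule closed_underI)
    fix n f cs assume nf: "(n, f) \<in> F" and l: "length cs = n" "set cs \<subseteq> D"
    have "set cs \<subseteq> A" using l unfolding D_def by auto
    then have fA: "f cs \<in> A" using closed_underD[OF cl nf l(1)] by blast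
    have "set (map (\<lambda>c. (c, c)) cs) \<subseteq> S" using l unfolding D_def by auto
    from Sclosed[OF nf _ this] l
    have "(f cs, f cs) \<in> S" by (simp add: o_def)
    then show "f cs \<in> D" using fA D_def by simp
  qed
  then have "subalgebra A F D" unfolding subalgebra_def D_def by blast
  moreover obtain x y where xy: "x \<in> A" "y \<in> A" "e [x] \<noteq> e [y]" using U2[OF mi] by blast
  moreover have "e [x] \<in> D" "e [y] \<in> D" using xy UA SU unfolding D_def urange_def by auto
  ultimately have DA: "D = A" using big_sub[OF ss] by metis
  have polS: "(p a, p b) \<in> S" if p: "p \<in> pol A F" for p
    using p
  proof (induction p rule: pol.induct)
    case pid
    have "(\<lambda>xs. xs ! 0) \<in> clo F 1" by (rule clo.proj) simp
    then show ?case unfolding S_def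
      by (intro CollectI exI[of _ "\<lambda>xs. xs ! 0"]) simp
  next
    case (pconst c) then show ?case using DA D_def by blast
  next
    case (papp k f ps)
    have "set (map (\<lambda>p. (p a, p b)) ps) \<subseteq> S" using papp by auto
    from Sclosed[OF papp(1) _ this] papp(2)
    show ?case by (simp add: o_def)
  qed
  have Sker: "e [x] = e [y]" if "(x, y) \<in> S" for x y
    using that nosep unfolding S_def by auto
  have "(a, b) \<in> {(a, b) \<in> A \<times> A. \<forall>p\<in>pol A F. ((\<lambda>x. e [x]) (p a), (\<lambda>x. e [x]) (p b)) \<in> Id_on (urange A e)}"
  proof -
    have "\<forall>p\<in>pol A F. (e [p a], e [p b]) \<in> Id_on (urange A e)"
    proof
      fix p assume p: "p \<in> pol A F"
      have "p a \<in> A" by (rule pol_closed[OF cl p a])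
      then have "e [p a] \<in> urange A e" unfolding urange_def by blast
      moreover have "e [p a] = e [p b]" using Sker polS[OF p] by blast
      ultimately show "(e [p a], e [p b]) \<in> Id_on (urange A e)" by (simp add: Id_on_iff)
    qed
    then show ?thesis using a b by simp
  qed
  then have "(a, b) \<in> Id_on A" unfolding Theta_Id[OF ss mi] .
  then show "a = b" by (simp add: Id_on_iff)
qed



lemma Ta_cases:
  assumes ss: "strictly_simple A F" and a: "a \<in> A"
  shows "{g [a] | g. g \<in> clo F 1} = A \<or> (\<forall>g\<in>clo F 1. g [a] = a)"
proof (cases "{g [a] | g. g \<in> clo F 1} = A")
  case True then show ?thesis by simp
next
  case False
  let ?T = "{g [a] | g. g \<in> clo F 1}"
  have sub: "subalgebra A F ?T" by (rule Ta_sub[OF ss a])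
  have "\<forall>B. subalgebra A F B \<and> B \<noteq> A \<longrightarrow> card B \<le> 1"
    using ss unfolding strictly_simple_def by (elim conjE)
  then have c: "card ?T \<le> 1" using sub False by blast
  have fin: "finite ?T" using sub ss unfolding subalgebra_def strictly_simple_def
    by (meson finite_subset)
  have aT: "a \<in> ?T"
  proof -
    have "(\<lambda>xs. xs ! 0) \<in> clo F 1" by (rule clo.proj) simp
    then show ?thesis by (intro CollectI exI[of _ "\<lambda>xs. xs ! 0"]) simp
  qed
  have c': "card ?T \<le> Suc 0" using c by simp
  have all: "\<forall>x\<in>?T. \<forall>y\<in>?T. x = y" by (rule iffD1[OF card_le_Suc0_iff_eq[OF fin] c'])
  have "g [a] = a" if g: "g \<in> clo F 1" for g
  proof -
    have "g [a] \<in> ?T" using g by blast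
    then show ?thesis using all aT by blast
  qed
  then show ?thesis by blast
qed

lemma separates_thm:
  assumes ss: "strictly_simple A F" and mi: "minimal_idempotent A F e"
  shows "separates A F e"
  unfolding separates_def
proof (intro ballI impI)
  fix a b assume a: "a \<in> A" and b: "b \<in> A" and ab: "a \<noteq> b"
  show "\<exists>g\<in>clo F 1. e [g [a]] \<noteq> e [g [b]]"
  proof (rule ccontr)
    assume "\<not> (\<exists>g\<in>clo F 1. e [g [a]] \<noteq> e [g [b]])"
    then have ns: "\<forall>g\<in>clo F 1. e [g [a]] = e [g [b]]" by blast
    then have ns': "\<forall>g\<in>clo F 1. e [g [b]] = e [g [a]]" by simp
    have e1: "e \<in> clo F 1" by (rule mi_e[OF mi])
    have p0: "(\<lambda>xs. xs ! 0) \<in> clo F 1" by (rule clo.proj) simp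
    have eab: "e [a] = e [b]" using bspec[OF ns p0] by simp
    consider "{g [a] | g. g \<in> clo F 1} = A" | "{g [b] | g. g \<in> clo F 1} = A"
      | "(\<forall>g\<in>clo F 1. g [a] = a)" "(\<forall>g\<in>clo F 1. g [b] = b)"
      using Ta_cases[OF ss a] Ta_cases[OF ss b] by blast
    then show False
    proof cases
      case 1 then show False using sep_main[OF ss mi a b ns] ab by blast
    next
      case 2 then show False using sep_main[OF ss mi b a ns'] ab by blast
    next
      case 3
      have "e [a] = a" "e [b] = b" using 3 e1 by auto
      then show False using eab ab by simp
    qed
  qed
qed

lemma dense_thm:
  assumes ss: "strictly_simple A F" and mi: "minimal_idempotent A F e"
  shows "dense A F e"
proof -
  let ?U = "urange A e"
  let ?S = "Sg A F ?U"
  have cl: "closed_under F A" by (rule ss_cl[OF ss])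
  have UA: "?U \<subseteq> A" by (rule U_sub[OF ss mi])
  have AA: "subalgebra A F A" using cl unfolding subalgebra_def by blast
  have SA: "?S \<subseteq> A" unfolding Sg_def using AA UA by blast
  have US: "?U \<subseteq> ?S" unfolding Sg_def by blast
  have "closed_under F ?S"
  proof (rule closed_underI)
    fix n f xs assume nf: "(n, f) \<in> F" and l: "length xs = n" "set xs \<subseteq> ?S"
    have "f xs \<in> B" if B: "subalgebra A F B" "?U \<subseteq> B" for B
    proof -
      have "set xs \<subseteq> B" using l(2) B unfolding Sg_def by blast
      moreover have "closed_under F B" using B unfolding subalgebra_def by blast
      ultimately show ?thesis using closed_underD nf l(1) by blast
    qed
    then show "f xs \<in> ?S" unfolding Sg_def by blast
  qed
  then have sub: "subalgebra A F ?S" using SA unfolding subalgebra_def by blast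
  obtain x y where xy: "x \<in> A" "y \<in> A" "e [x] \<noteq> e [y]" using U2[OF mi] by blast
  have "e [x] \<in> ?S" "e [y] \<in> ?S" using xy US unfolding urange_def by auto
  from big_sub[OF ss sub this xy(3)] show ?thesis unfolding dense_def .
qed

lemma loc_opsD:
  assumes "(n, fe) \<in> loc_ops F e" shows "\<exists>t\<in>clo F n. fe = (\<lambda>xs. e [t xs])"
  using assms unfolding loc_ops_def by auto

lemma loc_opsI:
  assumes "t \<in> clo F n" shows "(n, \<lambda>xs. e [t xs]) \<in> loc_ops F e"
  unfolding loc_ops_def by (intro CollectI exI[of _ n] exI[of _ t]) (simp add: assms)


lemma loc_closed:
  assumes ss: "strictly_simple A F" and mi: "minimal_idempotent A F e"
  shows "closed_under (loc_ops F e) (urange A e)"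
proof (rule closed_underI)
  fix n fe xs assume nf: "(n, fe) \<in> loc_ops F e" and l: "length xs = n" "set xs \<subseteq> urange A e"
  obtain t where t: "t \<in> clo F n" "fe = (\<lambda>xs. e [t xs])" using loc_opsD[OF nf] by blast
  have "set xs \<subseteq> A" using l(2) U_sub[OF ss mi] by blast
  then have "t xs \<in> A" using clo_closed[OF ss_cl[OF ss] t(1) l(1)] by blast
  then show "fe xs \<in> urange A e" using t(2) unfolding urange_def by blast
qed

lemma loc_cong:
  assumes ss: "strictly_simple A F" and mi: "minimal_idempotent A F e"
    and cg: "congruence (urange A e) (loc_ops F e) \<theta>"
  shows "\<theta> = Id_on (urange A e) \<or> \<theta> = urange A e \<times> urange A e"
proof -
  let ?U = "urange A e"
  have alg: "is_algebra A F" using ss unfolding strictly_simple_def simple_alg_def by (elim conjE)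
  have eqv: "equiv ?U \<theta>" using cg unfolding congruence_def by (elim conjE)
  have thU: "\<theta> \<subseteq> ?U \<times> ?U" using eqv by (elim equivE)
  have threfl: "(u, u) \<in> \<theta>" if "u \<in> ?U" for u
    using eqv that by (elim equivE) (simp add: refl_on_def)
  have UA: "?U \<subseteq> A" by (rule U_sub[OF ss mi])
  have phi: "\<forall>x\<in>A. (\<lambda>x. e [x]) x \<in> ?U" unfolding urange_def by auto
  define T where "T = {(a, b) \<in> A \<times> A. \<forall>p\<in>pol A F. ((\<lambda>x. e [x]) (p a), (\<lambda>x. e [x]) (p b)) \<in> \<theta>}"
  have c: "congruence A F T" unfolding T_def by (rule polcong[OF alg eqv phi])
  obtain x0 y0 where xy: "x0 \<in> A" "y0 \<in> A" "e [x0] \<noteq> e [y0]" using U2[OF mi] by blast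
  have x0U: "e [x0] \<in> ?U" "e [y0] \<in> ?U" using xy unfolding urange_def by auto
  consider "T = Id_on A" | "T = A \<times> A" using ss_simple[OF ss c] by blast
  then show ?thesis
  proof cases
    case 2
    have "?U \<times> ?U \<subseteq> \<theta>"
    proof
      fix uv assume "uv \<in> ?U \<times> ?U"
      then obtain u v where uv: "uv = (u, v)" "u \<in> ?U" "v \<in> ?U" by blast
      then have "(u, v) \<in> T" using 2 UA by blast
      then have "\<forall>p\<in>pol A F. (e [p u], e [p v]) \<in> \<theta>" unfolding T_def by simp
      from bspec[OF this pol.pid] have "(e [u], e [v]) \<in> \<theta>" by simp
      then show "uv \<in> \<theta>" using eU[OF mi uv(2)] eU[OF mi uv(3)] uv(1) by simp
    qed
    then show ?thesis using thU by blast
  next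
    case 1
    have diag: "\<forall>c\<in>A. (c, c) \<in> Gen F \<theta>"
    proof
      fix c assume "c \<in> A"
      show "(c, c) \<in> Gen F \<theta>"
        using Gen_full[OF ss _ _ xy(3) threfl[OF x0U(1)] threfl[OF x0U(2)] \<open>c \<in> A\<close>] x0U UA by blast
    qed
    have GenTh: "(e [x], e [y]) \<in> \<theta>" if xyG: "(x, y) \<in> Gen F \<theta>" for x y
    proof -
      obtain n t xs ys where g: "x = t xs" "y = t ys" "t \<in> clo F n" "length xs = n" "length ys = n"
        "\<forall>i<n. (xs ! i, ys ! i) \<in> \<theta>" using xyG unfolding Gen_def by blast
      have sx: "set xs \<subseteq> ?U"
      proof
        fix z assume "z \<in> set xs"
        then obtain i where "i < n" "z = xs ! i" using g(4) by (auto simp: in_set_conv_nth)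
        then show "z \<in> ?U" using g(6) thU by blast
      qed
      have sy: "set ys \<subseteq> ?U"
      proof
        fix z assume "z \<in> set ys"
        then obtain i where "i < n" "z = ys ! i" using g(5) by (auto simp: in_set_conv_nth)
        then show "z \<in> ?U" using g(6) thU by blast
      qed
      have "((\<lambda>xs. e [t xs]) xs, (\<lambda>xs. e [t xs]) ys) \<in> \<theta>"
        by (rule cong_app[OF cg loc_opsI[OF g(3)] g(4) g(5) sx sy g(6)])
      then show ?thesis using g(1,2) by simp
    qed
    have "\<theta> \<subseteq> Id_on ?U"
    proof
      fix uv assume uv: "uv \<in> \<theta>"
      obtain u v where uv1: "uv = (u, v)" by (cases uv)
      have uvU: "(u, v) \<in> ?U \<times> ?U" using thU uv uv1 by blast
      then have uv': "uv = (u, v)" "u \<in> ?U" "v \<in> ?U" using uv1 by auto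
      have G: "(u, v) \<in> Gen F \<theta>" using Gen_G[of u v \<theta> F] uv uv1 by simp
      have "\<forall>p\<in>pol A F. (e [p u], e [p v]) \<in> \<theta>"
      proof
        fix p assume p: "p \<in> pol A F"
        show "(e [p u], e [p v]) \<in> \<theta>" by (rule GenTh[OF Gen_pol[OF diag G p]])
      qed
      moreover have "u \<in> A" "v \<in> A" using uv' UA by auto
      ultimately have "(u, v) \<in> T" unfolding T_def by simp
      then show "uv \<in> Id_on ?U" using 1 uv' by (simp add: Id_on_iff)
    qed
    moreover have "Id_on ?U \<subseteq> \<theta>"
    proof
      fix z assume "z \<in> Id_on ?U"
      then obtain u where "u \<in> ?U" "z = (u, u)" by (rule Id_onE) simp
      then show "z \<in> \<theta>" using threfl by simp
    qed
    ultimately show ?thesis by (intro disjI1 subset_antisym)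
  qed
qed

lemma loc_sub:
  assumes ss: "strictly_simple A F" and mi: "minimal_idempotent A F e"
    and sub: "subalgebra (urange A e) (loc_ops F e) B" and ne: "B \<noteq> urange A e"
  shows "card B \<le> 1"
proof (rule ccontr)
  assume nc: "\<not> card B \<le> 1"
  let ?U = "urange A e"
  have BU: "B \<subseteq> ?U" and Bc: "closed_under (loc_ops F e) B" using sub unfolding subalgebra_def by auto
  have UA: "?U \<subseteq> A" by (rule U_sub[OF ss mi])
  have finA: "finite A" using ss unfolding strictly_simple_def by (elim conjE)
  have BA: "B \<subseteq> A" using BU UA by (rule order_trans)
  have fin: "finite B" by (rule finite_subset[OF BA finA])
  have "\<not> (\<forall>x\<in>B. \<forall>y\<in>B. x = y)"
  proof
    assume "\<forall>x\<in>B. \<forall>y\<in>B. x = y"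
    then have "card B \<le> Suc 0" by (rule iffD2[OF card_le_Suc0_iff_eq[OF fin]])
    then show False using nc by simp
  qed
  then obtain x y where xy: "x \<in> B" "y \<in> B" "x \<noteq> y" by blast
  have "?U \<subseteq> B"
  proof
    fix u assume u: "u \<in> ?U"
    have i1: "(x, x) \<in> Id_on B" "(y, y) \<in> Id_on B" using xy by (auto simp: Id_on_iff)
    have i2: "x \<in> A" "y \<in> A" using xy BU UA by auto
    have i3: "u \<in> A" using u UA by auto
    have "(u, u) \<in> Gen F (Id_on B)" by (rule Gen_full[OF ss i2 xy(3) i1 i3])
    then obtain n t xs ys where g: "u = t xs" "t \<in> clo F n" "length xs = n"
        "\<forall>i<n. (xs ! i, ys ! i) \<in> Id_on B" unfolding Gen_def by blast
    have sx: "set xs \<subseteq> B"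
    proof
      fix z assume "z \<in> set xs"
      then obtain i where "i < n" "z = xs ! i" using g(3) by (auto simp: in_set_conv_nth)
      then show "z \<in> B" using g(4) by (auto simp: Id_on_iff)
    qed
    have "(\<lambda>xs. e [t xs]) xs \<in> B" by (rule closed_underD[OF Bc loc_opsI[OF g(2)] g(3) sx])
    then have "e [u] \<in> B" using g(1) by simp
    then show "u \<in> B" using eU[OF mi u] by simp
  qed
  then show False using BU ne by blast
qed

lemma loc_ss:
  assumes ss: "strictly_simple A F" and mi: "minimal_idempotent A F e"
  shows "strictly_simple (loc_univ A e) (loc_ops F e)"
proof -
  let ?U = "urange A e"
  have finA: "finite A" using ss unfolding strictly_simple_def by (elim conjE)
  have fin: "finite ?U" unfolding urange_def using finA by simp
  obtain x0 y0 where xy: "x0 \<in> A" "y0 \<in> A" "e [x0] \<noteq> e [y0]" using U2[OF mi] by blast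
  have x0U: "e [x0] \<in> ?U" "e [y0] \<in> ?U" using xy unfolding urange_def by auto
  have cl: "closed_under (loc_ops F e) ?U" by (rule loc_closed[OF ss mi])
  have alg: "is_algebra ?U (loc_ops F e)"
    using cl x0U unfolding is_algebra_def closed_under_def by blast
  have two: "\<exists>a\<in>?U. \<exists>b\<in>?U. a \<noteq> b" using x0U xy(3) by blast
  have cg: "\<forall>\<theta>. congruence ?U (loc_ops F e) \<theta> \<longrightarrow> \<theta> = Id_on ?U \<or> \<theta> = ?U \<times> ?U"
    using loc_cong[OF ss mi] by blast
  have sb: "\<forall>B. subalgebra ?U (loc_ops F e) B \<and> B \<noteq> ?U \<longrightarrow> card B \<le> 1"
    using loc_sub[OF ss mi] by blast
  show ?thesis unfolding loc_univ_def strictly_simple_def simple_alg_def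
    using fin alg two cg sb by blast
qed

lemma loc_tm:
  assumes ss: "strictly_simple A F" and mi: "minimal_idempotent A F e"
  shows "term_minimal (loc_univ A e) (loc_ops F e)"
proof -
  let ?U = "urange A e"
  let ?pr = "\<lambda>xs::'a list. xs ! 0"
  have e1: "e \<in> clo F 1" by (rule mi_e[OF mi])
  obtain x0 y0 where xy: "x0 \<in> A" "y0 \<in> A" "e [x0] \<noteq> e [y0]" using U2[OF mi] by blast
  have x0U: "e [x0] \<in> ?U" "e [y0] \<in> ?U" using xy unfolding urange_def by auto
  have p1: "?pr \<in> clo (loc_ops F e) 1" by (rule clo.proj) simp
  have p2: "nonconstant_on ?U ?pr" unfolding nonconstant_on_def using x0U xy(3) by auto
  have p3: "idempotent_on ?U ?pr" unfolding idempotent_on_def by simp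
  have ur: "urange ?U ?pr = ?U" unfolding urange_def by simp
  have p4: "urange ?U g = urange ?U ?pr"
    if g: "g \<in> clo (loc_ops F e) 1" and nc: "nonconstant_on ?U g" and id: "idempotent_on ?U g"
      and sub: "urange ?U g \<subseteq> urange ?U ?pr" for g
  proof -
    obtain t where t: "t \<in> clo F 1" "\<forall>xs. length xs = 1 \<longrightarrow> g xs = t xs"
      using clo_loc[OF g e1] by blast
    have gt: "g [x] = t [x]" for x using t(2) by simp
    define h where "h = (\<lambda>xs. t (map (\<lambda>g. g xs) [e]))"
    have hc: "h \<in> clo F 1" unfolding h_def by (rule clo_comp[OF t(1)]) (use e1 in auto)
    have hx: "h [x] = g [e [x]]" for x unfolding h_def by (simp add: gt)
    have eUx: "e [x] \<in> ?U" if "x \<in> A" for x using that unfolding urange_def by blast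
    have gU: "g [u] \<in> ?U" if "u \<in> ?U" for u
    proof -
      have "g [u] \<in> urange ?U g" using that unfolding urange_def by blast
      then show ?thesis using sub ur by blast
    qed
    have hnc: "nonconstant_on A h"
    proof -
      obtain u v where uv: "u \<in> ?U" "v \<in> ?U" "g [u] \<noteq> g [v]" using nc unfolding nonconstant_on_def by blast
      have "u \<in> A" "v \<in> A" using uv U_sub[OF ss mi] by auto
      moreover have "h [u] = g [u]" "h [v] = g [v]" using hx eU[OF mi uv(1)] eU[OF mi uv(2)] by auto
      ultimately show ?thesis unfolding nonconstant_on_def using uv(3) by metis
    qed
    have hid: "idempotent_on A h"
      unfolding idempotent_on_def
    proof
      fix x assume x: "x \<in> A"
      have gu: "g [e [x]] \<in> ?U" using gU[OF eUx[OF x]] .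
      have "h [h [x]] = g [e [g [e [x]]]]" by (simp add: hx)
      also have "\<dots> = g [g [e [x]]]" using eU[OF mi gu] by simp
      also have "\<dots> = g [e [x]]" using id eUx[OF x] unfolding idempotent_on_def by blast
      finally show "h [h [x]] = h [x]" by (simp add: hx)
    qed
    have hr: "urange A h = ?U"
    proof -
      have "urange A h = (\<lambda>x. g [e [x]]) ` A" unfolding urange_def by (simp add: hx)
      also have "\<dots> = (\<lambda>u. g [u]) ` ((\<lambda>x. e [x]) ` A)" by (simp add: image_image)
      also have "\<dots> = urange ?U g" unfolding urange_def ..
      finally have hU: "urange A h = urange ?U g" .
      have "urange A h \<subseteq> urange A e" using hU sub ur by simp
      then show ?thesis using mi_min[OF mi hc hnc hid] by simp
    qed
    have "urange ?U g = urange A h"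
      unfolding urange_def by (simp add: hx image_image)
    then show ?thesis using hr ur by simp
  qed
  show ?thesis unfolding term_minimal_def minimal_idempotent_def loc_univ_def
    using p1 p2 p3 p4 by blast
qed

theorem mainTheorem6:
  fixes A :: "'a set" and F :: "(nat \<times> ('a list \<Rightarrow> 'a)) set" and e :: "'a list \<Rightarrow> 'a"
  assumes "strictly_simple A F"
    and "minimal_idempotent A F e"
  shows "separates A F e \<and> dense A F e \<and>
         strictly_simple (loc_univ A e) (loc_ops F e) \<and>
         term_minimal (loc_univ A e) (loc_ops F e)"
  using separates_thm[OF assms] dense_thm[OF assms] loc_ss[OF assms] loc_tm[OF assms] by blast


end
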